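(* In the setting below, for every $m\in\mathbb N$ with $1\le m\le \ell N$, $$\mathbb E\,S(\widetilde{a_m})\le(8+16C_G)\,\mathbb E\,S(a_m).$$
   Context: Let $n,N\in\mathbb N$, $I=\{1,\dots,n\}$, $J=\{1,\dots,N\}$, $G$ a nonempty finite set of maps $I\to J$, $\mathbb P$ the normalized counting measure on $G$ ($\mathbb P(E)=|E|/|G|$) and $\mathbb E$ its expectation. Assume there is a constant $C_G\ge1$ such that for all $i\in I,j\in J$, $\mathbb P(g(i)=j)=1/N$, and for all pairs $(i_1,j_1)\ne(i_2,j_2)$ in $I\times J$, $\mathbb P(g(i_1)=j_1,g(i_2)=j_2)\le C_G/N^2$. Fix an integer $1\le\ell\le n$ and a matrix $a\in\mathbb R^{n\times N}$ with non-negative entries, and let $h:\{1,\dots,nN\}\to I\times J$ be a bijection with $a(h(j))\ge a(h(j+1))$ for $1\le j<\ell N$ and $a(h(j))=0$ for $\ell N<j\le nN$ (for a matrix $b$, $b(i,j)=b_{ij}$). Let $\mathcal A_h$ be the set of non-negative $n\times N$ matrices $b$ with $b(h(j))\ge b(h(j+1))$ for $1\le j<\ell N$ and $b(h(j))=0$ for $\ell N<j\le nN$. For $b\in\mathcal A_h$ let $\widetilde b$ be the matrix with $\widetilde b(h(j))=\big(\frac1{\ell N}\sum_{i=1}^{\ell N}b(h(i))\big)\mathbb 1_{\{1,\dots,\ell N\}}(j)$ for $1\le j\le nN$. For $1\le m\le nN$ let $a_m$ be the matrix with $a_m(h(k))=\mathbb 1_{\{1,\dots,m\}}(k)$. For $b\in\mathcal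 A_h$ and $g\in G$ let $S_k(b)(g)$ be the $k$-th largest (with multiplicity) of the numbers $b_{1g(1)},\dots,b_{ng(n)}$, and $S(b)(g)=\sum_{k=1}^{\ell}S_k(b)(g)$. *)

theory Defs
  imports Complex_Main "HOL-Library.FuncSet"
begin

(* Matrices are functions on index pairs (i,j); only entries in I x J matter. *)

definition expect :: "(nat \<Rightarrow> nat) set \<Rightarrow> ((nat \<Rightarrow> nat) \<Rightarrow> real) \<Rightarrow> real" where
  "expect G X = (\<Sum>g\<in>G. X g) / real (card G)"

definition prob :: "(nat \<Rightarrow> nat) set \<Rightarrow> ((nat \<Rightarrow> nat) \<Rightarrow> bool) \<Rightarrow> real" where
  "prob G P = real (card {g\<in>G. P g}) / real (card G)"

definition sorted_vals :: "nat \<Rightarrow> (nat \<times> nat \<Rightarrow> real) \<Rightarrow> (nat \<Rightarrow> nat) \<Rightarrow> real list" where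
  "sorted_vals n b g = rev (sort (map (\<lambda>i. b (i, g i)) [1..<n+1]))"

definition Sk :: "nat \<Rightarrow> nat \<Rightarrow> (nat \<times> nat \<Rightarrow> real) \<Rightarrow> (nat \<Rightarrow> nat) \<Rightarrow> real" where
  "Sk n k b g = sorted_vals n b g ! (k - 1)"

definition S :: "nat \<Rightarrow> nat \<Rightarrow> (nat \<times> nat \<Rightarrow> real) \<Rightarrow> (nat \<Rightarrow> nat) \<Rightarrow> real" where
  "S n l b g = (\<Sum>k=1..l. Sk n k b g)"

definition tilde :: "nat \<Rightarrow> (nat \<Rightarrow> nat \<times> nat) \<Rightarrow> (nat \<times> nat \<Rightarrow> real) \<Rightarrow> (nat \<times> nat \<Rightarrow> real)" where
  "tilde L h b = (\<lambda>p. if p \<in> h ` {1..L} then (\<Sum>i=1..L. b (h i)) / real L else 0)"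

definition amat :: "(nat \<Rightarrow> nat \<times> nat) \<Rightarrow> nat \<Rightarrow> (nat \<times> nat \<Rightarrow> real)" where
  "amat h m = (\<lambda>p. if p \<in> h ` {1..m} then 1 else 0)"

end

theory Submission
  imports Defs "HOL-Library.Multiset"
begin



lemma mset_map_ind:
  "mset (map (\<lambda>i. if P i then (c::real) else 0) ys) =
     replicate_mset (length (filter (\<lambda>i. \<not> P i) ys)) 0 + replicate_mset (length (filter P ys)) c"
  by (induction ys) auto

lemma sum_ind_min:
  "(\<Sum>k=1..l. if k - 1 < K then (c::real) else 0) = c * real (min l K)"
proof (induction l)
  case 0 then show ?case by simp
next
  case (Suc l)
  then show ?case by (cases "l < K") (auto simp: min_def algebra_simps)
qed

lemma S_ind:
  fixes c :: real
  assumes c: "c \<ge> 0" and ln: "l \<le> n"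
  shows "S n l (\<lambda>p. if p \<in> E then c else 0) g = c * real (min l (card {i\<in>{1..n}. (i, g i) \<in> E}))"
proof -
  define P where "P = (\<lambda>i. (i, g i) \<in> E)"
  define K where "K = card {i\<in>{1..n}. (i, g i) \<in> E}"
  have lenK: "length (filter P [1..<n+1]) = K"
    unfolding K_def P_def by (subst distinct_length_filter) (auto intro!: arg_cong[where f=card])
  have lenK': "length (filter (\<lambda>i. \<not> P i) [1..<n+1]) = n - K"
    proof -
    have "length (filter P [1..<n+1]) + length (filter (\<lambda>i. \<not> P i) [1..<n+1]) = n"
      by (metis sum_length_filter_compl length_upt diff_add_inverse2)
    then show ?thesis using lenK by linarith
  qed
  have xs: "map (\<lambda>i. (\<lambda>p. if p \<in> E then c else 0) (i, g i)) [1..<n+1]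
        = map (\<lambda>i. if P i then c else 0) [1..<n+1]" unfolding P_def by simp
  have srt: "sort (map (\<lambda>i. if P i then c else 0) [1..<n+1]) = replicate (n-K) 0 @ replicate K c"
  proof (rule properties_for_sort)
    show "mset (replicate (n - K) 0 @ replicate K c) = mset (map (\<lambda>i. if P i then c else 0) [1..<n + 1])"
      unfolding mset_map_ind lenK lenK' by simp
    show "sorted (replicate (n - K) 0 @ replicate K c)"
      using c by (auto simp: sorted_append)
  qed
  have sv: "sorted_vals n (\<lambda>p. if p \<in> E then c else 0) g = replicate K c @ replicate (n-K) 0"
    unfolding sorted_vals_def xs srt by simp
  have "S n l (\<lambda>p. if p \<in> E then c else 0) g = (\<Sum>k=1..l. if k - 1 < K then c else 0)"
    unfolding S_def Sk_def sv
  proof (rule sum.cong)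
    fix k assume "k \<in> {1..l}"
    then have "k - 1 < n" using ln by auto
    then show "(replicate K c @ replicate (n - K) 0) ! (k - 1) = (if k - 1 < K then c else 0)"
      by (auto simp: nth_append)
  qed simp
  then show ?thesis unfolding sum_ind_min K_def .
qed



lemma card_as_sum:
  assumes "E \<subseteq> {1..n} \<times> UNIV" "finite E"
  shows "real (card {i\<in>{1..n}. (i, g i) \<in> E}) = (\<Sum>p\<in>E. if g (fst p) = snd p then 1 else 0)"
proof -
  have "{p\<in>E. g (fst p) = snd p} = (\<lambda>i. (i, g i)) ` {i\<in>{1..n}. (i, g i) \<in> E}"
    using assms(1) by force
  moreover have "inj_on (\<lambda>i. (i, g i)) {i\<in>{1..n}. (i, g i) \<in> E}" by (auto simp: inj_on_def)
  ultimately have "card {i\<in>{1..n}. (i, g i) \<in> E} = card {p\<in>E. g (fst p) = snd p}"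
    by (simp add: card_image)
  moreover have "real (card {p\<in>E. g (fst p) = snd p}) = (\<Sum>p\<in>E. if g (fst p) = snd p then 1 else 0)"
    using assms(2) by (simp add: sum.If_cases Int_def)
  ultimately show ?thesis by simp
qed

lemma first_moment:
  fixes G :: "(nat \<Rightarrow> nat) set"
  assumes finG: "finite G" and finE: "finite E"
    and un: "\<And>p. p \<in> E \<Longrightarrow> real (card {g\<in>G. g (fst p) = snd p}) = real (card G) / real N"
  shows "(\<Sum>g\<in>G. \<Sum>p\<in>E. (if g (fst p) = snd p then 1 else 0 :: real)) = real (card E) * real (card G) / real N"
proof -
  have "(\<Sum>g\<in>G. \<Sum>p\<in>E. (if g (fst p) = snd p then 1 else 0 :: real))
      = (\<Sum>p\<in>E. \<Sum>g\<in>G. (if g (fst p) = snd p then 1 else 0 :: real))" by (rule sum.swap)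
  also have "\<dots> = (\<Sum>p\<in>E. real (card G) / real N)"
    using finG un by (intro sum.cong) (auto simp: sum.If_cases Int_def)
  finally show ?thesis by simp
qed

lemma second_moment:
  fixes G :: "(nat \<Rightarrow> nat) set" and C :: real
  assumes finG: "finite G" and finE: "finite E" and C: "C \<ge> 0"
    and un: "\<And>p. p \<in> E \<Longrightarrow> real (card {g\<in>G. g (fst p) = snd p}) = real (card G) / real N"
    and pr: "\<And>p q. p \<in> E \<Longrightarrow> q \<in> E \<Longrightarrow> p \<noteq> q \<Longrightarrow>
        real (card {g\<in>G. g (fst p) = snd p \<and> g (fst q) = snd q}) \<le> C * real (card G) / real N ^ 2"
  shows "(\<Sum>g\<in>G. (\<Sum>p\<in>E. (if g (fst p) = snd p then 1 else 0 :: real))^2)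
     \<le> real (card E) * real (card G) / real N + real (card E)^2 * (C * real (card G) / real N ^ 2)"
proof -
  define X :: "(nat \<Rightarrow> nat) \<Rightarrow> nat \<times> nat \<Rightarrow> real" where "X = (\<lambda>g p. (if g (fst p) = snd p then 1 else 0 :: real))"
  have "(\<Sum>g\<in>G. (\<Sum>p\<in>E. X g p)^2) = (\<Sum>g\<in>G. \<Sum>p\<in>E. \<Sum>q\<in>E. X g p * X g q)"
    by (simp add: power2_eq_square sum_product)
  also have "\<dots> = (\<Sum>p\<in>E. \<Sum>q\<in>E. \<Sum>g\<in>G. X g p * X g q)"
    by (simp add: sum.swap[of _ G] sum.swap[of _ G E])
  also have "\<dots> \<le> (\<Sum>p\<in>E. \<Sum>q\<in>E. (if p = q then real (card G) / real N else 0) + C * real (card G) / real N ^ 2)"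
  proof (intro sum_mono)
    fix p q assume p: "p \<in> E" and q: "q \<in> E"
    have CG0: "C * real (card G) / real N ^ 2 \<ge> 0" using C by simp
    show "(\<Sum>g\<in>G. X g p * X g q) \<le> (if p = q then real (card G) / real N else 0) + C * real (card G) / real N ^ 2"
    proof (cases "p = q")
      case True
      have "(\<Sum>g\<in>G. X g p * X g q) = real (card {g\<in>G. g (fst p) = snd p})"
      proof -
        have "(\<Sum>g\<in>G. X g p * X g q) = (\<Sum>g\<in>G. if g (fst p) = snd p then 1 else 0)"
          using True by (intro sum.cong) (auto simp: X_def)
        then show ?thesis using finG by (simp add: sum.If_cases Int_def)
      qed
      then show ?thesis using True un[OF p] CG0 by simp
    next
      case False
      have "(\<Sum>g\<in>G. X g p * X g q) = real (card {g\<in>G. g (fst p) = snd p \<and> g (fst q) = snd q})"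
      proof -
        have "(\<Sum>g\<in>G. X g p * X g q) = (\<Sum>g\<in>G. if g (fst p) = snd p \<and> g (fst q) = snd q then 1 else 0)"
          by (intro sum.cong) (auto simp: X_def)
        then show ?thesis using finG by (simp add: sum.If_cases Int_def)
      qed
      then show ?thesis using False pr[OF p q False] by simp
    qed
  qed
  also have "\<dots> = real (card E) * real (card G) / real N + real (card E)^2 * (C * real (card G) / real N ^ 2)"
    using finE by (simp add: sum.distrib power2_eq_square algebra_simps add_divide_distrib)
  finally show ?thesis unfolding X_def .
qed

lemma min_lower:
  fixes l k lam :: real
  assumes "0 < l" "0 \<le> k" "0 < lam" "lam \<le> 1"
  shows "lam * k - lam^2 * k^2 / (4*l) \<le> min l k"
proof (cases "k \<le> l")
  case True
  have "lam * k - lam^2 * k^2 / (4*l) \<le> lam * k" using assms by simp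
  also have "\<dots> \<le> k" using assms by (simp add: mult_left_le_one_le)
  finally show ?thesis using True by simp
next
  case False
  have "0 \<le> (lam*k - 2*l)^2 / (4*l)" using assms by simp
  also have "(lam*k - 2*l)^2 / (4*l) = l - (lam * k - lam^2 * k^2 / (4*l))"
    using assms by (simp add: field_simps power2_eq_square)
  finally show ?thesis using False by simp
qed


theorem lemma3p4:
  fixes n N l :: nat and G :: "(nat \<Rightarrow> nat) set" and CG :: real
    and a :: "nat \<times> nat \<Rightarrow> real" and h :: "nat \<Rightarrow> nat \<times> nat" and m :: nat
  assumes nN: "n \<ge> 1" "N \<ge> 1"
    and G_maps: "G \<subseteq> {1..n} \<rightarrow>\<^sub>E {1..N}"
    and G_ne: "G \<noteq> {}"
    and CG: "CG \<ge> 1"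
    and unif: "\<forall>i\<in>{1..n}. \<forall>j\<in>{1..N}. prob G (\<lambda>g. g i = j) = 1 / real N"
    and pair: "\<forall>i1\<in>{1..n}. \<forall>j1\<in>{1..N}. \<forall>i2\<in>{1..n}. \<forall>j2\<in>{1..N}.
                 (i1, j1) \<noteq> (i2, j2) \<longrightarrow>
                 prob G (\<lambda>g. g i1 = j1 \<and> g i2 = j2) \<le> CG / real N ^ 2"
    and l: "1 \<le> l" "l \<le> n"
    and a_nonneg: "\<forall>p\<in>{1..n} \<times> {1..N}. a p \<ge> 0"
    and h_bij: "bij_betw h {1..n*N} ({1..n} \<times> {1..N})"
    and h_mono: "\<forall>j. 1 \<le> j \<and> j < l*N \<longrightarrow> a (h j) \<ge> a (h (j+1))"
    and h_zero: "\<forall>j. l*N < j \<and> j \<le> n*N \<longrightarrow> a (h j) = 0"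
    and m: "1 \<le> m" "m \<le> l*N"
  shows "expect G (S n l (tilde (l*N) h (amat h m)))
           \<le> (8 + 16 * CG) * expect G (S n l (amat h m))"
  
proof -
  have finG: "finite G" by (rule finite_subset[OF G_maps]) (simp add: finite_PiE)
  have cG: "real (card G) > 0" using finG G_ne by (simp add: card_gt_0_iff)
  have N0: "real N > 0" using nN by simp
  define E where "E = h ` {1..l*N}"
  define F where "F = h ` {1..m}"
  have lNn: "l*N \<le> n*N" using l by simp
  have injE: "inj_on h {1..l*N}"
    by (rule inj_on_subset[OF bij_betw_imp_inj_on[OF h_bij]]) (use lNn in auto)
  have injF: "inj_on h {1..m}" by (rule inj_on_subset[OF injE]) (use m in auto)
  have cardE: "card E = l*N" unfolding E_def using card_image[OF injE] by simp
  have cardF: "card F = m" unfolding F_def using card_image[OF injF] by simp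
  have hsub: "h ` {1..n*N} = {1..n} \<times> {1..N}" using h_bij by (simp add: bij_betw_def)
  have sub1: "{1..l*N} \<subseteq> {1..n*N}" using lNn by auto
  have mnN: "m \<le> n*N" using m(2) lNn by linarith
  have sub2: "{1..m} \<subseteq> {1..n*N}" using mnN by auto
  have Esub: "E \<subseteq> {1..n} \<times> {1..N}" unfolding E_def hsub[symmetric] by (rule image_mono[OF sub1])
  have Fsub: "F \<subseteq> {1..n} \<times> {1..N}" unfolding F_def hsub[symmetric] by (rule image_mono[OF sub2])
  have finE: "finite E" "finite F" unfolding E_def F_def by auto
  have un': "real (card {g\<in>G. g (fst p) = snd p}) = real (card G) / real N"
    if pin: "p \<in> {1..n} \<times> {1..N}" for p
  proof -
    have "real (card {g\<in>G. g (fst p) = snd p}) / real (card G) = 1 / real N"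
    proof -
      obtain i j where p: "p = (i, j)" "i \<in> {1..n}" "j \<in> {1..N}" using pin by auto
      have "prob G (\<lambda>g. g i = j) = 1 / real N" using unif p(2,3) by blast
      then show ?thesis unfolding prob_def p by simp
    qed
    then show ?thesis using cG N0 by (simp add: field_simps)
  qed
  have pr': "real (card {g\<in>G. g (fst p) = snd p \<and> g (fst q) = snd q}) \<le> CG * real (card G) / real N ^ 2"
    if pq: "p \<in> {1..n} \<times> {1..N}" "q \<in> {1..n} \<times> {1..N}" "p \<noteq> q" for p q
  proof -
    have "real (card {g\<in>G. g (fst p) = snd p \<and> g (fst q) = snd q}) / real (card G) \<le> CG / real N ^ 2"
    proof -
      obtain i j where p: "p = (i, j)" "i \<in> {1..n}" "j \<in> {1..N}" using pq by auto
      obtain i2 j2 where q: "q = (i2, j2)" "i2 \<in> {1..n}" "j2 \<in> {1..N}" using pq by auto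
      have "prob G (\<lambda>g. g i = j \<and> g i2 = j2) \<le> CG / real N ^ 2"
        using pair p q pq(3) by blast
      then show ?thesis unfolding prob_def p q by simp
    qed
    then show ?thesis using cG N0 by (simp add: field_simps)
  qed
  have sumam: "(\<Sum>i=1..l*N. amat h m (h i)) = real m"
  proof -
    have "(\<Sum>i=1..l*N. amat h m (h i)) = (\<Sum>i\<in>{1..l*N}. if i \<in> {1..m} then 1 else 0)"
    proof (intro sum.cong refl)
      fix i assume i: "i \<in> {1..l*N}"
      have "h i \<in> h ` {1..m} \<longleftrightarrow> i \<in> {1..m}"
        using inj_on_image_mem_iff[OF injE i, of "{1..m}"] m by auto
      then show "amat h m (h i) = (if i \<in> {1..m} then 1 else 0)" by (simp add: amat_def)
    qed
    also have "\<dots> = (\<Sum>i\<in>{1..m}. 1)"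
    proof -
      have "{1..m} \<subseteq> {1..l*N}" using m by auto
      then have "{1..l*N} \<inter> {1..m} = {1..m}" by blast
      moreover have "(\<Sum>i\<in>{1..l*N} \<inter> {1..m}. 1::real) = (\<Sum>i\<in>{1..l*N}. if i \<in> {1..m} then 1 else 0)"
        by (rule sum.inter_restrict) simp
      ultimately show ?thesis by metis
    qed
    finally show ?thesis by simp
  qed
  define c where "c = real m / real (l*N)"
  have c0: "c \<ge> 0" unfolding c_def by simp
  have tl: "tilde (l*N) h (amat h m) = (\<lambda>p. if p \<in> E then c else 0)"
    unfolding tilde_def sumam c_def E_def by simp
  have am: "amat h m = (\<lambda>p. if p \<in> F then 1 else 0)" by (simp add: amat_def F_def)
  define K1 where "K1 g = real (card {i\<in>{1..n}. (i, g i) \<in> E})" for g :: "nat \<Rightarrow> nat"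
  define K2 where "K2 g = real (card {i\<in>{1..n}. (i, g i) \<in> F})" for g :: "nat \<Rightarrow> nat"
  have S1: "S n l (tilde (l*N) h (amat h m)) g = c * min (real l) (K1 g)" for g
    unfolding tl K1_def using S_ind[OF c0 l(2), of E g] by (simp add: of_nat_min)
  have S2: "S n l (amat h m) g = min (real l) (K2 g)" for g
    unfolding am K2_def using S_ind[of 1 l n F g] l by (simp add: of_nat_min)
  have K1s: "K1 g = (\<Sum>p\<in>E. if g (fst p) = snd p then 1 else 0)" for g
    unfolding K1_def using card_as_sum[of E n g] Esub finE by auto
  have K2s: "K2 g = (\<Sum>p\<in>F. if g (fst p) = snd p then 1 else 0)" for g
    unfolding K2_def using card_as_sum[of F n g] Fsub finE by auto
  have unE: "real (card {g\<in>G. g (fst p) = snd p}) = real (card G) / real N" if "p \<in> E" for p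
    using un' Esub that by blast
  have unF: "real (card {g\<in>G. g (fst p) = snd p}) = real (card G) / real N" if "p \<in> F" for p
    using un' Fsub that by blast
  have prF: "real (card {g\<in>G. g (fst p) = snd p \<and> g (fst q) = snd q}) \<le> CG * real (card G) / real N ^ 2"
    if "p \<in> F" "q \<in> F" "p \<noteq> q" for p q
    using pr' Fsub that by blast
  have K1sum: "(\<Sum>g\<in>G. K1 g) = real (l*N) * real (card G) / real N"
    unfolding K1s by (subst first_moment[OF finG finE(1) unE]) (simp_all add: cardE)
  have K2sum: "(\<Sum>g\<in>G. K2 g) = real m * real (card G) / real N"
    unfolding K2s by (subst first_moment[OF finG finE(2) unF]) (simp_all add: cardF)
  have CG0: "CG \<ge> 0" using CG by simp
  have K2sq: "(\<Sum>g\<in>G. (K2 g)^2) \<le> real m * real (card G) / real N + real m ^ 2 * (CG * real (card G) / real N ^ 2)"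
    using second_moment[OF finG finE(2) CG0 unF prF] unfolding K2s cardF by simp
  define u where "u = real m * real (card G) / real N"
  define mu where "mu = real m / real N"
  define lam where "lam = 1 / (1 + CG)"
  have u0: "u > 0" unfolding u_def using m cG N0 by simp
  have mul: "mu \<le> real l" unfolding mu_def using m N0 by (simp add: field_simps) (metis of_nat_le_iff of_nat_mult)
  have mu0: "mu \<ge> 0" unfolding mu_def by simp
  have l0: "real l \<ge> 1" using l by simp
  have lam0: "lam > 0" "lam \<le> 1" unfolding lam_def using CG by auto
  have lamC: "lam * (1 + CG) = 1" unfolding lam_def using CG by simp
  have A: "(\<Sum>g\<in>G. S n l (tilde (l*N) h (amat h m)) g) \<le> u"
  proof -
    have "(\<Sum>g\<in>G. S n l (tilde (l*N) h (amat h m)) g) \<le> (\<Sum>g\<in>G. c * K1 g)"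
      unfolding S1 using c0 by (intro sum_mono mult_left_mono) auto
    also have "\<dots> = c * (real (l*N) * real (card G) / real N)" by (simp add: sum_distrib_left[symmetric] K1sum)
    also have "\<dots> = u" unfolding c_def u_def using l nN by (simp add: field_simps)
    finally show ?thesis .
  qed
  have K2nn: "K2 g \<ge> 0" for g unfolding K2_def by simp
  have B: "lam * u - lam^2 / (4 * real l) * (u + u * CG * mu) \<le> (\<Sum>g\<in>G. S n l (amat h m) g)"
  proof -
    have "(\<Sum>g\<in>G. lam * K2 g - lam^2 * (K2 g)^2 / (4 * real l)) \<le> (\<Sum>g\<in>G. S n l (amat h m) g)"
      unfolding S2 using min_lower l0 K2nn lam0 by (intro sum_mono) auto
    moreover have "(\<Sum>g\<in>G. lam * K2 g - lam^2 * (K2 g)^2 / (4 * real l))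
        = lam * (\<Sum>g\<in>G. K2 g) - lam^2 / (4 * real l) * (\<Sum>g\<in>G. (K2 g)^2)"
      by (simp add: sum_subtractf sum_distrib_left sum_divide_distrib)
    moreover have "lam^2 / (4 * real l) * (\<Sum>g\<in>G. (K2 g)^2) \<le> lam^2 / (4 * real l) * (u + u * CG * mu)"
    proof (rule mult_left_mono)
      have "real m ^ 2 * (CG * real (card G) / real N ^ 2) = u * CG * mu"
        unfolding u_def mu_def by (simp add: field_simps power2_eq_square)
      then show "(\<Sum>g\<in>G. (K2 g)^2) \<le> u + u * CG * mu" using K2sq unfolding u_def by simp
    qed (use l0 in simp)
    ultimately show ?thesis unfolding K2sum u_def[symmetric] by linarith
  qed
  have ar: "u \<le> (8 + 16 * CG) * (lam * u - lam^2 / (4 * real l) * (u + u * CG * mu))"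
  proof -
    have q: "(1 + CG * mu) / real l \<le> 1 + CG"
    proof -
      have "1 / real l \<le> 1" using l0 by simp
      moreover have "CG * mu / real l \<le> CG"
        using mul l0 CG0 by (simp add: divide_le_eq mult_left_mono)
      ultimately show ?thesis by (simp add: add_divide_distrib)
    qed
    have "lam^2 / (4 * real l) * (u + u * CG * mu) = u * lam^2 / 4 * ((1 + CG * mu) / real l)"
      by (simp add: field_simps)
    also have "\<dots> \<le> u * lam^2 / 4 * (1 + CG)"
      using q u0 by (intro mult_left_mono) auto
    also have "\<dots> = u * lam / 4 * (lam * (1 + CG))" by (simp add: power2_eq_square algebra_simps)
    also have "\<dots> = u * lam / 4" using lamC by simp
    finally have "lam * u - lam^2 / (4 * real l) * (u + u * CG * mu) \<ge> u * lam * 3 / 4" by (simp add: mult.commute)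
    hence "(8 + 16 * CG) * (lam * u - lam^2 / (4 * real l) * (u + u * CG * mu)) \<ge> (8 + 16 * CG) * (u * lam * 3 / 4)"
      using CG0 by (intro mult_left_mono) auto
    moreover have "(8 + 16 * CG) * (u * lam * 3 / 4) \<ge> u"
    proof -
      have "(8 + 16 * CG) * (u * lam * 3 / 4) = u * (6 + 12 * CG) / (1 + CG)"
        unfolding lam_def using CG by (simp add: field_simps)
      moreover have "u * (6 + 12 * CG) / (1 + CG) \<ge> u" using u0 CG by (simp add: field_simps)
      ultimately show ?thesis by metis
    qed
    ultimately show ?thesis by linarith
  qed
  have main: "(\<Sum>g\<in>G. S n l (tilde (l*N) h (amat h m)) g) \<le> (8 + 16 * CG) * (\<Sum>g\<in>G. S n l (amat h m) g)"
  proof -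
    have "(8 + 16 * CG) * (lam * u - lam^2 / (4 * real l) * (u + u * CG * mu)) \<le> (8 + 16 * CG) * (\<Sum>g\<in>G. S n l (amat h m) g)"
      using B CG0 by (intro mult_left_mono) auto
    then show ?thesis using A ar by linarith
  qed
  show ?thesis unfolding expect_def using main cG
    by (simp add: divide_right_mono)
qed

end
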